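(* For every even $n\ge2$, every integer $r\ge0$, every $p\in(0,1)$ and every graph $G$ of order $n$, $$\mathcal A_r(G)\le (4n)^{3n/2-1}\,p^{\frac{r}{4n}}\,N^{-d(G)}.$$
   Context: Fix $p\in(0,1)$ and $N:=1/(1-p)$. Trees. A 2-rooted ternary tree of order $n$ is a finite plane tree $U$ with a root vertex of degree 2 and $n$ true vertices of degree 4; each edge is internal or a leaf (half-edge). Each true vertex $v$ has parent edge $e_1(v)$ (towards the root) and ordered children edges $e_2(v),e_3(v),e_4(v)$. One root edge has type $\alpha$, the other $\bar\alpha$; if $e_1(v)$ has type $\tau$ then $e_2(v)$ has the other type and $e_3(v),e_4(v)$ have type $\tau$. Leaves of type $\alpha$ are leaves, of type $\bar\alpha$ anti-leaves ($n+1$ each). A heap-ordering labels true vertices bijectively by $\{1,\dots,n\}$, increasing from parent to child. Graphs. For even $n$, a graph of order $n$ is $G=(U,w,w')$: $U$ heap-ordered; $w$ a bijection leaves $\to$ anti-leaves (dashed edges; internal edges are solid); $w'$ a partition of true vertices into $n/2$ pairs (wavy edges) with, for each pair $\{v,v'\}$ ($v$ of smaller label), one of eight propagators in $(S,j,k)=(S_v,j_v,k_v)$, $(S',j',k')=(S_{v'},j_{v'},k_{v'})$: $\delta_{jj'}\delta_{kk'}$, $\delta_{j,S-j'}\delta_{kk'}$, $\delta_{jj'}\delta_{k,S-k'}$, $\delta_{j,S-j'}\delta_{k,S-k'}$, $\delta_{jk'}\delta_{kj'}$, $\delta_{j,S-k'}\delta_{kj'}$, $\delta_{jk'}\delta_{k,S-j'}$,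 $\delta_{j,S-k'}\delta_{k,S-j'}$, together with $S=S'$. Amplitude. A momentum attribution gives each true vertex $S_v\ge0$, $0\le j_v,k_v\le S_v$ and momenta $j_v,S_v-j_v,k_v,S_v-k_v$ to the ends at $v$ of $e_1,\dots,e_4$. For $r\in\mathbb N$ it is admissible if solid edges get equal momenta at both ends, both root edges carry momentum $r$, every dashed edge $e$ joins leaves of equal momentum $m(e)$, and every wavy edge satisfies $S_v=S_{v'}$ and its propagator. $\mathcal A_r(G):=N^{-n}\sum_{\text{admissible}}\prod_{e\text{ dashed}}p^{m(e)}$. Faces and degree. Call the edge-ends at true vertices and at the root slots. Each propagator of a wavy edge $\{v,v'\}$, with $S=S'$, identifies each of $j,S-j,k,S-k$ of $v$ with one momentum of $v'$, hence pairs each slot of $v$ with a slot of $v'$; these four pairs are the corners of that wavy edge. Let $\Gamma$ be the graph on the slots whose edges are the solid and dashed edges of $G$, the corners, and one extra edge joining the two root slots; its connected components (cycles) are the faces, $F(G)$ their number. Let $E$ be the $(n/2)\times F(G)$ matrix with rows indexed by wavy edges $\omega=\{v,v'\}$ ($v$ of smaller label), columns by faces, $E_{\omega f}$ = (number of corners of $\omega$ in $f$ containing $e_1(v)$ or $e_2(v)$) minus (number of corners of $\omega$ in $f$ containing $e_3(v)$ or $e_4(v)$). $R(G)=\operatorname{rank}E$, and $d(G):=n-F(G)+R(G)+1$. *)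

theory Defs
  imports "HOL-Analysis.Infinite_Sum" "HOL-Library.Extended_Nonnegative_Real"
          "Jordan_Normal_Form.DL_Rank"
begin

text \<open>TA is the type alpha, TB the type alpha-bar.\<close>
datatype ty = TA | TB

fun flip :: "ty \<Rightarrow> ty" where
  "flip TA = TB" | "flip TB = TA"

text \<open>Slots = edge-ends at the root (one per type of root edge) and at true
  vertices: VS v i is the end at vertex v of the edge e_i(v), i in 1..4.\<close>
datatype slot = RootS ty | VS nat nat

text \<open>Where a true vertex is attached: to the root edge of type tau, or as the
  child edge e_c(u) of the vertex u (c in 2..4).\<close>
datatype pos = AtRoot ty | AtChild nat nat

text \<open>A graph: heap-ordered tree (true vertices are identified with their labels
  1..n, given by the attachment map parent), the dashed edges (map leaves to
  anti-leaves), and the wavy edges (fixed-point-free involution mate on the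
  vertices; propg v in 0..7 is the propagator of the wavy edge whose smaller
  endpoint is v).\<close>
record graph =
  parent :: "nat \<Rightarrow> pos"
  dashed :: "slot \<Rightarrow> slot"
  mate :: "nat \<Rightarrow> nat"
  propg :: "nat \<Rightarrow> nat"

definition verts :: "nat \<Rightarrow> nat set" where
  "verts n = {1..n}"

definition pslot :: "graph \<Rightarrow> nat \<Rightarrow> slot" where
  "pslot G v = (case parent G v of AtRoot \<tau> \<Rightarrow> RootS \<tau> | AtChild u c \<Rightarrow> VS u c)"

text \<open>Type of the parent edge e_1(v).\<close>
function vtype :: "(nat \<Rightarrow> pos) \<Rightarrow> nat \<Rightarrow> ty" where
  "vtype par v = (case par v of AtRoot \<tau> \<Rightarrow> \<tau>
     | AtChild u c \<Rightarrow> (if u < v then (if c = 2 then flip (vtype par u) else vtype par u) else TA))"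
  by pat_completeness auto
termination by (relation "measure (\<lambda>(par, v). v)") auto

definition slot_type :: "graph \<Rightarrow> slot \<Rightarrow> ty" where
  "slot_type G s = (case s of RootS \<tau> \<Rightarrow> \<tau>
     | VS v i \<Rightarrow> (if i = 2 then flip (vtype (parent G) v) else vtype (parent G) v))"

definition all_slots :: "nat \<Rightarrow> slot set" where
  "all_slots n = range RootS \<union> {VS v i | v i. v \<in> verts n \<and> i \<in> {1..4}}"

definition child_slots :: "nat \<Rightarrow> slot set" where
  "child_slots n = range RootS \<union> {VS v c | v c. v \<in> verts n \<and> c \<in> {2..4}}"

definition leaf_slots :: "nat \<Rightarrow> graph \<Rightarrow> slot set" where
  "leaf_slots n G = child_slots n - pslot G ` verts n"

definition leaves :: "nat \<Rightarrow> graph \<Rightarrow> slot set" where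
  "leaves n G = {s \<in> leaf_slots n G. slot_type G s = TA}"

definition antileaves :: "nat \<Rightarrow> graph \<Rightarrow> slot set" where
  "antileaves n G = {s \<in> leaf_slots n G. slot_type G s = TB}"

definition is_heap_tree :: "nat \<Rightarrow> graph \<Rightarrow> bool" where
  "is_heap_tree n G \<longleftrightarrow>
     (\<forall>v\<in>verts n. case parent G v of AtRoot \<tau> \<Rightarrow> True
                   | AtChild u c \<Rightarrow> u \<in> verts n \<and> u < v \<and> c \<in> {2..4})
     \<and> inj_on (pslot G) (verts n)"

definition wavy :: "nat \<Rightarrow> graph \<Rightarrow> nat set" where
  "wavy n G = {v \<in> verts n. v < mate G v}"

definition is_graph :: "nat \<Rightarrow> graph \<Rightarrow> bool" where
  "is_graph n G \<longleftrightarrow> is_heap_tree n G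
     \<and> bij_betw (dashed G) (leaves n G) (antileaves n G)
     \<and> (\<forall>v\<in>verts n. mate G v \<in> verts n \<and> mate G v \<noteq> v \<and> mate G (mate G v) = v)
     \<and> (\<forall>v\<in>wavy n G. propg G v < 8)"

definition propagator :: "nat \<Rightarrow> nat \<Rightarrow> nat \<Rightarrow> nat \<Rightarrow> nat \<Rightarrow> nat \<Rightarrow> nat \<Rightarrow> bool" where
  "propagator t S j k S' j' k' \<longleftrightarrow>
     (if t = 0 then j = j' \<and> k = k'
      else if t = 1 then j = S - j' \<and> k = k'
      else if t = 2 then j = j' \<and> k = S - k'
      else if t = 3 then j = S - j' \<and> k = S - k'
      else if t = 4 then j = k' \<and> k = j'
      else if t = 5 then j = S - k' \<and> k = j'
      else if t = 6 then j = k' \<and> k = S - j'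
      else if t = 7 then j = S - k' \<and> k = S - j'
      else False)"

type_synonym attribution = "(nat \<Rightarrow> nat) \<times> (nat \<Rightarrow> nat) \<times> (nat \<Rightarrow> nat)"

fun mom :: "nat \<Rightarrow> attribution \<Rightarrow> slot \<Rightarrow> nat" where
  "mom r a (RootS \<tau>) = r"
| "mom r (S, j, k) (VS v i) =
     (if i = 1 then j v else if i = 2 then S v - j v else if i = 3 then k v else S v - k v)"

definition admissible :: "nat \<Rightarrow> nat \<Rightarrow> graph \<Rightarrow> attribution \<Rightarrow> bool" where
  "admissible n r G a \<longleftrightarrow> (case a of (S, j, k) \<Rightarrow>
     (\<forall>v. v \<notin> verts n \<longrightarrow> S v = 0 \<and> j v = 0 \<and> k v = 0)
     \<and> (\<forall>v\<in>verts n. j v \<le> S v \<and> k v \<le> S v)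
     \<and> (\<forall>v\<in>verts n. mom r a (VS v 1) = mom r a (pslot G v))
     \<and> (\<forall>s\<in>leaves n G. mom r a (dashed G s) = mom r a s)
     \<and> (\<forall>v\<in>wavy n G. S v = S (mate G v) \<and>
          propagator (propg G v) (S v) (j v) (k v) (S (mate G v)) (j (mate G v)) (k (mate G v))))"

definition Nc :: "real \<Rightarrow> real" where
  "Nc p = 1 / (1 - p)"

definition amp :: "real \<Rightarrow> nat \<Rightarrow> nat \<Rightarrow> graph \<Rightarrow> ennreal" where
  "amp p n r G = ennreal (inverse (Nc p ^ n)) *
     (\<Sum>\<^sub>\<infinity>a\<in>{a. admissible n r G a}. \<Prod>s\<in>leaves n G. ennreal (p ^ mom r a s))"

text \<open>Corner table: the slot index of v' paired with slot index i of v by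
  propagator t (slot 1,2,3,4 carry j, S-j, k, S-k).\<close>
definition cp :: "nat \<Rightarrow> nat \<Rightarrow> nat" where
  "cp t i = [[1,2,3,4],[2,1,3,4],[1,2,4,3],[2,1,4,3],
             [3,4,1,2],[4,3,1,2],[3,4,2,1],[4,3,2,1]] ! t ! (i - 1)"

definition gam :: "nat \<Rightarrow> graph \<Rightarrow> (slot \<times> slot) set" where
  "gam n G = {(VS v 1, pslot G v) | v. v \<in> verts n}
     \<union> {(s, dashed G s) | s. s \<in> leaves n G}
     \<union> {(VS v i, VS (mate G v) (cp (propg G v) i)) | v i. v \<in> wavy n G \<and> i \<in> {1..4}}
     \<union> {(RootS TA, RootS TB)}"

definition faces :: "nat \<Rightarrow> graph \<Rightarrow> slot set set" where
  "faces n G = all_slots n // ((gam n G \<union> (gam n G)\<inverse>)\<^sup>*)"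

definition Eent :: "graph \<Rightarrow> nat \<Rightarrow> slot set \<Rightarrow> real" where
  "Eent G v f = (\<Sum>i\<in>{1..4::nat}. if VS v i \<in> f then (if i \<le> 2 then 1 else -1) else 0)"

definition Emat :: "nat \<Rightarrow> graph \<Rightarrow> real mat" where
  "Emat n G = (let rl = sorted_list_of_set (wavy n G);
                   fl = (SOME fl. distinct fl \<and> set fl = faces n G)
               in mat (length rl) (length fl) (\<lambda>(a, b). Eent G (rl ! a) (fl ! b)))"

definition Rk :: "nat \<Rightarrow> graph \<Rightarrow> nat" where
  "Rk n G = vec_space.rank (dim_row (Emat n G)) (Emat n G)"

definition deg :: "nat \<Rightarrow> graph \<Rightarrow> int" where
  "deg n G = int n - int (card (faces n G)) + int (Rk n G) + 1"

end

theory Submission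
  imports Defs
begin

lemma ty_UNIV: "(UNIV :: ty set) = {TA, TB}"
  using ty.exhaust by auto

lemma cp_range: "t < 8 \<Longrightarrow> i \<in> {1..4} \<Longrightarrow> cp t i \<in> {1..4}"
proof -
  assume "t < 8" "i \<in> {1..4}"
  hence "t \<in> {0,1,2,3,4,5,6,7}" "i \<in> {1,2,3,4}" by auto
  thus ?thesis by (auto simp: cp_def)
qed

lemma cp_surj: "t < 8 \<Longrightarrow> i \<in> {1..4} \<Longrightarrow> \<exists>i'\<in>{1..4}. cp t i' = i"
proof -
  assume "t < 8" "i \<in> {1..4}"
  hence "t \<in> {0,1,2,3,4,5,6,7}" "i \<in> {1,2,3,4}" by auto
  hence d: "cp t 1 = i \<or> cp t 2 = i \<or> cp t 3 = i \<or> cp t 4 = i" by (auto simp: cp_def)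
  have "1 \<in> {1..4::nat}" "2 \<in> {1..4::nat}" "3 \<in> {1..4::nat}" "4 \<in> {1..4::nat}" by auto
  thus ?thesis using d by blast
qed

context vec_space begin

lemma col_in_span_others:
  fixes E :: "'a mat"
  assumes E: "E \<in> carrier_mat n F" and b0: "b0 < F"
    and rs: "\<And>i. i < n \<Longrightarrow> (\<Sum>b<F. E $$ (i,b)) = 0"
  shows "col E b0 \<in> span (col E ` ({..<F} - {b0}))"
proof -
  let ?B = "{..<F} - {b0}"
  let ?S = "col E ` ?B"
  define a where "a = (\<lambda>v. - of_nat (card {b\<in>?B. col E b = v}) :: 'a)"
  have Sc: "?S \<subseteq> carrier_vec n" using E by auto
  have "lincomb a ?S = col E b0"
  proof (rule eq_vecI)
    fix i assume "i < dim_vec (col E b0)"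
    hence i: "i < n" using E by auto
    have "lincomb a ?S $ i = (\<Sum>v\<in>?S. a v * v $ i)" by (rule lincomb_index[OF i Sc])
    also have "\<dots> = - (\<Sum>v\<in>?S. (\<Sum>b\<in>{b\<in>?B. col E b = v}. E $$ (i,b)))"
    proof -
      have "(\<Sum>b\<in>{b\<in>?B. col E b = v}. E $$ (i,b)) = - (a v * v $ i)" if "v \<in> ?S" for v
      proof -
        have "(\<Sum>b\<in>{b\<in>?B. col E b = v}. E $$ (i,b)) = (\<Sum>b\<in>{b\<in>?B. col E b = v}. v $ i)"
          using E i by (intro sum.cong) auto
        thus ?thesis by (simp add: a_def)
      qed
      thus ?thesis by (simp add: sum_negf)
    qed
    also have "(\<Sum>v\<in>?S. (\<Sum>b\<in>{b\<in>?B. col E b = v}. E $$ (i,b))) = (\<Sum>b\<in>?B. E $$ (i,b))"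
      by (rule sum.image_gen[symmetric]) auto
    also have "(\<Sum>b\<in>?B. E $$ (i,b)) = (\<Sum>b<F. E $$ (i,b)) - E $$ (i,b0)"
      using b0 by (simp add: sum_diff1)
    finally show "lincomb a ?S $ i = col E b0 $ i" using rs[OF i] E i b0 by simp
  next
    show "dim_vec (lincomb a ?S) = dim_vec (col E b0)" using E Sc by simp
  qed
  moreover have "finite ?S" by auto
  ultimately show ?thesis unfolding span_def
    by (intro CollectI exI[of _ a] exI[of _ "col E ` ({..<F} - {b0})"]) auto
qed

lemma lin_indpt_empty: "\<not> lin_dep {}"
  unfolding lin_dep_def by auto

lemma kernel_basis:
  fixes E :: "'a mat"
  assumes E: "E \<in> carrier_mat n F" and b0: "b0 < F"
    and rs: "\<And>i. i < n \<Longrightarrow> (\<Sum>b<F. E $$ (i,b)) = 0"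
  shows "\<exists>K. K \<subseteq> {..<F} - {b0} \<and> card K = rank E \<and>
     (\<forall>y\<in>carrier_vec F. E *\<^sub>v y = 0\<^sub>v n \<longrightarrow> (\<forall>b<F. b \<notin> K \<longrightarrow> y $ b = 0) \<longrightarrow> y = 0\<^sub>v F)"
proof -
  let ?B = "{..<F} - {b0}"
  let ?S = "col E ` ?B"
  have Sc: "?S \<subseteq> carrier_vec n" using E by auto
  obtain U where U: "maximal U (\<lambda>T. T \<subseteq> ?S \<and> \<not> lin_dep T)" "finite U"
    using maximal_exists_superset[of ?S "\<lambda>T. T \<subseteq> ?S \<and> \<not> lin_dep T" "{}"] lin_indpt_empty
    by auto
  have US: "U \<subseteq> ?S" and Ui: "\<not> lin_dep U" using U(1) unfolding maximal_def by auto
  have dimU: "vectorspace.dim class_ring (span_vs ?S) = card U"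
    by (rule dim_span[OF Sc _ U(1)]) auto
  have setcols: "set (cols E) = col E ` {..<F}" using E by (auto simp: cols_def)
  have span_eq: "span (set (cols E)) = span ?S"
  proof
    have "set (cols E) \<subseteq> span ?S"
    proof
      fix v assume "v \<in> set (cols E)"
      then obtain b where b: "b < F" "v = col E b" using setcols by auto
      show "v \<in> span ?S"
      proof (cases "b = b0")
        case True thus ?thesis using col_in_span_others[OF E b0 rs] b by simp
      next
        case False thus ?thesis using in_own_span[OF Sc] b by auto
      qed
    qed
    thus "span (set (cols E)) \<subseteq> span ?S"
      by (rule span_is_subset) (rule span_is_submodule[OF Sc])
  next
    show "span ?S \<subseteq> span (set (cols E))" by (rule span_is_monotone) (auto simp: setcols)
  qed
  have rk: "rank E = card U" unfolding rank_def span_eq using dimU by simp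
  define idx where "idx = (\<lambda>u. SOME b. b \<in> ?B \<and> col E b = u)"
  have idx: "idx u \<in> ?B \<and> col E (idx u) = u" if "u \<in> U" for u
  proof -
    have "\<exists>b. b \<in> ?B \<and> col E b = u" using US that by auto
    thus ?thesis unfolding idx_def by (rule someI_ex)
  qed
  have inj: "inj_on idx U" by (metis idx inj_onI)
  define K where "K = idx ` U"
  have KB: "K \<subseteq> ?B" using idx K_def by auto
  have cK: "card K = rank E" using rk inj K_def card_image by auto
  have ker: "y = 0\<^sub>v F" if y: "y \<in> carrier_vec F" "E *\<^sub>v y = 0\<^sub>v n" "\<forall>b<F. b \<notin> K \<longrightarrow> y $ b = 0" for y
  proof -
    have Uc: "U \<subseteq> carrier_vec n" using US Sc by auto
    have lc: "lincomb (\<lambda>u. y $ idx u) U = 0\<^sub>v n"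
    proof (rule eq_vecI)
      fix i assume "i < dim_vec (0\<^sub>v n :: 'a vec)"
      hence i: "i < n" by simp
      have "lincomb (\<lambda>u. y $ idx u) U $ i = (\<Sum>u\<in>U. y $ idx u * u $ i)"
        by (rule lincomb_index[OF i Uc])
      also have "\<dots> = (\<Sum>u\<in>U. y $ idx u * E $$ (i, idx u))"
      proof (intro sum.cong refl)
        fix u assume u: "u \<in> U"
        have "u $ i = col E (idx u) $ i" using idx[OF u] by simp
        also have "\<dots> = E $$ (i, idx u)" by (rule index_col) (use E i idx[OF u] in auto)
        finally show "y $ idx u * u $ i = y $ idx u * E $$ (i, idx u)" by simp
      qed
      also have "\<dots> = (\<Sum>b\<in>K. y $ b * E $$ (i, b))"
        unfolding K_def by (rule sum.reindex[OF inj, symmetric, unfolded comp_def])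
      also have "\<dots> = (\<Sum>b\<in>{..<F}. y $ b * E $$ (i, b))"
        using KB y(3) by (intro sum.mono_neutral_left) auto
      also have "\<dots> = (E *\<^sub>v y) $ i"
        using E i y(1) by (auto simp: scalar_prod_def mult.commute intro!: sum.cong)
      finally show "lincomb (\<lambda>u. y $ idx u) U $ i = 0\<^sub>v n $ i" using y(2) i by simp
    next
      show "dim_vec (lincomb (\<lambda>u. y $ idx u) U) = dim_vec (0\<^sub>v n :: 'a vec)"
        using Uc by simp
    qed
    have z: "y $ idx u = 0" if u: "u \<in> U" for u
    proof (rule ccontr)
      assume "y $ idx u \<noteq> 0"
      hence "lin_dep U" by (intro lin_dep_crit[OF U(2) subset_refl _ u]) (use lc in auto)
      with Ui show False by simp
    qed
    show ?thesis
    proof (rule eq_vecI)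
      fix b assume "b < dim_vec (0\<^sub>v F :: 'a vec)"
      hence b: "b < F" by simp
      show "y $ b = 0\<^sub>v F $ b"
      proof (cases "b \<in> K")
        case True then obtain u where "u \<in> U" "b = idx u" unfolding K_def by auto
        thus ?thesis using z b by simp
      next
        case False thus ?thesis using y(3) b by simp
      qed
    qed (use y in simp)
  qed
  show ?thesis using KB cK ker by blast
qed

lemma rank_ge_private:
  fixes E :: "'a mat"
  assumes E: "E \<in> carrier_mat n F"
    and B: "B \<subseteq> {..<F}" and ro: "\<And>b. b \<in> B \<Longrightarrow> rowof b < n"
    and nz: "\<And>b. b \<in> B \<Longrightarrow> E $$ (rowof b, b) \<noteq> 0"
    and z: "\<And>b b'. b \<in> B \<Longrightarrow> b' \<in> B \<Longrightarrow> b' \<noteq> b \<Longrightarrow> E $$ (rowof b, b') = 0"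
  shows "card B \<le> rank E"
proof -
  have finB: "finite B" using B finite_subset by blast
  have colidx: "col E b $ i = E $$ (i, b)" if "b \<in> B" "i < n" for b i
    by (rule index_col) (use E B that in auto)
  have inj: "inj_on (col E) B"
  proof (rule inj_onI)
    fix b b' assume bb: "b \<in> B" "b' \<in> B" "col E b = col E b'"
    show "b = b'"
    proof (rule ccontr)
      assume "b \<noteq> b'"
      hence "E $$ (rowof b, b') = 0" using z bb by auto
      moreover have "E $$ (rowof b, b) = E $$ (rowof b, b')"
        using colidx[of b "rowof b"] colidx[of b' "rowof b"] bb ro by metis
      ultimately show False using nz bb by simp
    qed
  qed
  let ?U = "col E ` B"
  have Uc: "?U \<subseteq> carrier_vec n" using E B by auto
  have li: "\<not> lin_dep ?U"
  proof
    assume "lin_dep ?U"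
    then obtain A a v where A: "finite A" "A \<subseteq> ?U" "lincomb a A = 0\<^sub>v n" "v \<in> A" "a v \<noteq> 0"
      unfolding lin_dep_def by auto
    obtain b where b: "b \<in> B" "v = col E b" using A by auto
    have Ac: "A \<subseteq> carrier_vec n" using A Uc by auto
    have "0 = lincomb a A $ rowof b" using A ro b by simp
    also have "\<dots> = (\<Sum>x\<in>A. a x * x $ rowof b)" by (rule lincomb_index[OF ro[OF b(1)] Ac])
    also have "\<dots> = a v * v $ rowof b"
    proof (rule sum.remove[OF A(1) A(4), THEN trans])
      have "(\<Sum>x\<in>A - {v}. a x * x $ rowof b) = 0"
      proof (rule sum.neutral, rule ballI)
        fix x assume x: "x \<in> A - {v}"
        then obtain b' where b': "b' \<in> B" "x = col E b'" using A by auto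
        have "b' \<noteq> b" using x b b' by auto
        thus "a x * x $ rowof b = 0" using z[OF b(1) b'(1)] colidx[OF b'(1) ro[OF b(1)]] b' by simp
      qed
      thus "a v * v $ rowof b + (\<Sum>x\<in>A - {v}. a x * x $ rowof b) = a v * v $ rowof b" by simp
    qed
    also have "\<dots> = a v * E $$ (rowof b, b)" using colidx[OF b(1) ro[OF b(1)]] b by simp
    finally show False using A(5) nz[OF b(1)] by simp
  qed
  have "card ?U \<le> rank E"
    by (rule rank_ge_card_indpt[OF E _ li]) (use E B in \<open>auto simp: cols_def\<close>)
  thus ?thesis using card_image[OF inj] by simp
qed

end
lemma (in vec_space) rank_ge_private':
  fixes E :: "'a mat"
  assumes E: "E \<in> carrier_mat n F" and finI: "finite I"
    and c: "\<And>x. x \<in> I \<Longrightarrow> c x < F" and ro: "\<And>x. x \<in> I \<Longrightarrow> ro x < n"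
    and nz: "\<And>x. x \<in> I \<Longrightarrow> E $$ (ro x, c x) \<noteq> 0"
    and z: "\<And>x y. x \<in> I \<Longrightarrow> y \<in> I \<Longrightarrow> x \<noteq> y \<Longrightarrow> E $$ (ro x, c y) = 0"
  shows "card I \<le> rank E"
proof -
  have inj: "inj_on c I"
  proof (rule inj_onI)
    fix x y assume "x \<in> I" "y \<in> I" "c x = c y"
    thus "x = y" using nz z by metis
  qed
  let ?ro = "\<lambda>b. ro (inv_into I c b)"
  have "card (c ` I) \<le> rank E"
  proof (rule rank_ge_private[OF E, of _ ?ro])
    show "c ` I \<subseteq> {..<F}" using c by auto
    show "\<And>b. b \<in> c ` I \<Longrightarrow> ?ro b < n" using ro inv_into_into by (metis inv_into_f_f)
    show "\<And>b. b \<in> c ` I \<Longrightarrow> E $$ (?ro b, b) \<noteq> 0" using nz inj by auto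
    show "E $$ (?ro b, b') = 0" if bb: "b \<in> c ` I" "b' \<in> c ` I" "b' \<noteq> b" for b b'
    proof -
      obtain x y where xy: "x \<in> I" "y \<in> I" "b = c x" "b' = c y" using bb by blast
      hence "x \<noteq> y" using bb by auto
      thus ?thesis using z xy inv_into_f_f[OF inj xy(1)] by simp
    qed
  qed
  thus ?thesis using card_image[OF inj] by simp
qed

definition mf :: "nat \<Rightarrow> nat \<Rightarrow> nat \<Rightarrow> nat \<Rightarrow> nat" where
  "mf S j k i = (if i = 1 then j else if i = 2 then S - j else if i = 3 then k else S - k)"

lemma mom_VS: "mom r (S, j, k) (VS v i) = mf (S v) (j v) (k v) i"
  by (simp add: mf_def)

lemma corner_mom:
  assumes t: "t < 8" and i: "i \<in> {1..4}" and SS: "Sv = Sw"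
    and pr: "propagator t Sv jv kv Sw jw kw" and le: "jw \<le> Sw" "kw \<le> Sw" "jv \<le> Sv" "kv \<le> Sv"
  shows "mf Sv jv kv i = mf Sw jw kw (cp t i)"
proof -
  have T: "t = 0 \<or> t = 1 \<or> t = 2 \<or> t = 3 \<or> t = 4 \<or> t = 5 \<or> t = 6 \<or> t = 7" using t by linarith
  have I: "i = 1 \<or> i = 2 \<or> i = 3 \<or> i = 4" using i by auto
  from T I show ?thesis using pr le unfolding SS
    by (elim disjE; simp add: propagator_def cp_def mf_def)
qed


lemma geo_le: "0 < (q::real) \<Longrightarrow> q < 1 \<Longrightarrow> (\<Sum>t\<in>{..T}. q ^ t) \<le> 1 / (1 - q)"
proof -
  assume q: "0 < q" "q < 1"
  have "(\<Sum>t\<in>{..T}. q ^ t) = (\<Sum>t<Suc T. q ^ t)" by (simp add: lessThan_Suc_atMost)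
  also have "\<dots> = (1 - q ^ Suc T) / (1 - q)" by (simp only: sum_gp_strict) (use q in simp)
  also have "\<dots> \<le> 1 / (1 - q)" using q by (intro divide_right_mono) auto
  finally show ?thesis .
qed

lemma q_facts:
  fixes p :: real and c :: nat
  assumes p: "0 < p" "p < 1" and c: "1 \<le> c"
  defines "q \<equiv> p powr (1 / real c)"
  shows "0 < q" "q < 1" "1 / (1 - q) \<le> real c / (1 - p)"
proof -
  show q0: "0 < q" unfolding q_def using p by simp
  have qc: "q ^ c = p"
  proof -
    have "q ^ c = q powr real c" using q0 by (simp add: powr_realpow)
    also have "\<dots> = p powr (1 / real c * real c)" unfolding q_def by (simp add: powr_powr)
    also have "\<dots> = p" using c p by simp
    finally show ?thesis .
  qed
  show q1: "q < 1"
  proof (rule ccontr)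
    assume "\<not> q < 1"
    hence "1 \<le> q ^ c" by simp
    thus False using qc p by simp
  qed
  have "1 - p = (1 - q) * (\<Sum>i<c. q ^ i)" using qc one_diff_power_eq[of q c] by simp
  also have "\<dots> \<le> (1 - q) * real c"
  proof (rule mult_left_mono)
    have "(\<Sum>i<c. q ^ i) \<le> (\<Sum>i<c. (1::real))"
      by (rule sum_mono) (use q0 q1 in \<open>auto intro: power_le_one\<close>)
    thus "(\<Sum>i<c. q ^ i) \<le> real c" by simp
  qed (use q1 in simp)
  finally have "1 - p \<le> (1 - q) * real c" .
  thus "1 / (1 - q) \<le> real c / (1 - p)" using p q1 by (simp add: divide_simps mult.commute)
qed

locale GG =
  fixes n :: nat and G :: graph
  assumes isg: "is_graph n G" and n2: "2 \<le> n"
begin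

abbreviation "AS \<equiv> all_slots n"
definition rel where "rel = (gam n G \<union> (gam n G)\<inverse>)\<^sup>*"
definition relA where "relA = rel \<inter> (AS \<times> AS)"

lemma ht: "is_heap_tree n G" and dbij: "bij_betw (dashed G) (leaves n G) (antileaves n G)"
  and mt: "\<And>v. v \<in> verts n \<Longrightarrow> mate G v \<in> verts n \<and> mate G v \<noteq> v \<and> mate G (mate G v) = v"
  and pg: "\<And>v. v \<in> wavy n G \<Longrightarrow> propg G v < 8"
  using isg unfolding is_graph_def by auto

lemma pslot_inj: "inj_on (pslot G) (verts n)"
  using ht unfolding is_heap_tree_def by auto

lemma pslot_cases:
  assumes "v \<in> verts n"
  shows "(\<exists>\<tau>. pslot G v = RootS \<tau>) \<or> (\<exists>u c. pslot G v = VS u c \<and> u \<in> verts n \<and> u < v \<and> c \<in> {2..4})"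
  using ht assms unfolding is_heap_tree_def pslot_def by (cases "parent G v") auto

lemma one_root: "\<exists>\<tau>. pslot G 1 = RootS \<tau>"
proof -
  have "1 \<in> verts n" using n2 by (auto simp: verts_def)
  thus ?thesis using pslot_cases[of 1] by (auto simp: verts_def)
qed

lemma wavy_sub: "wavy n G \<subseteq> verts n" by (auto simp: wavy_def)

lemma child_sub: "child_slots n \<subseteq> AS"
  by (auto simp: child_slots_def all_slots_def)

lemma pslot_child: "v \<in> verts n \<Longrightarrow> pslot G v \<in> child_slots n"
  using pslot_cases[of v] by (auto simp: child_slots_def)

lemma leaves_sub: "leaves n G \<subseteq> child_slots n" "antileaves n G \<subseteq> child_slots n"
  by (auto simp: leaves_def antileaves_def leaf_slots_def)

lemma gam_in: "(x, y) \<in> gam n G \<Longrightarrow> x \<in> AS \<and> y \<in> AS"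
proof -
  assume xy: "(x, y) \<in> gam n G"
  show ?thesis
  using xy unfolding gam_def
  proof (elim UnE)
    assume "(x, y) \<in> {(VS v 1, pslot G v) |v. v \<in> verts n}"
    thus ?thesis using pslot_child child_sub by (auto simp: all_slots_def)
  next
    assume "(x, y) \<in> {(s, dashed G s) |s. s \<in> leaves n G}"
    thus ?thesis using leaves_sub child_sub bij_betwE[OF dbij] by blast
  next
    assume "(x, y) \<in> {(VS v i, VS (mate G v) (cp (propg G v) i)) |v i. v \<in> wavy n G \<and> i \<in> {1..4}}"
    then obtain v i where "x = VS v i" "y = VS (mate G v) (cp (propg G v) i)" "v \<in> wavy n G" "i \<in> {1..4}"
      by blast
    thus ?thesis using wavy_sub mt[of v] cp_range[OF pg] by (auto simp: all_slots_def)
  next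
    assume "(x, y) \<in> {(RootS TA, RootS TB)}"
    thus ?thesis by (auto simp: all_slots_def)
  qed
qed

lemma gam_solid: "v \<in> verts n \<Longrightarrow> (VS v 1, pslot G v) \<in> gam n G"
  unfolding gam_def by blast
lemma gam_dash: "s \<in> leaves n G \<Longrightarrow> (s, dashed G s) \<in> gam n G"
  unfolding gam_def by blast
lemma gam_corner: "v \<in> wavy n G \<Longrightarrow> i \<in> {1..4} \<Longrightarrow> (VS v i, VS (mate G v) (cp (propg G v) i)) \<in> gam n G"
  unfolding gam_def by blast
lemma gam_root: "(RootS TA, RootS TB) \<in> gam n G"
  unfolding gam_def by blast

lemma rel_in: "(x, y) \<in> rel \<Longrightarrow> x \<in> AS \<Longrightarrow> y \<in> AS"
  unfolding rel_def
  by (induction rule: rtrancl_induct) (use gam_in in auto)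

lemma rel_sym: "sym rel"
  unfolding rel_def by (intro sym_rtrancl) (auto simp: sym_def)

lemma equivA: "equiv AS relA"
  unfolding equiv_def relA_def
proof (intro conjI)
  show "refl_on AS (rel \<inter> AS \<times> AS)" unfolding refl_on_def rel_def by auto
  show "sym (rel \<inter> AS \<times> AS)" using rel_sym unfolding sym_def by auto
  show "trans (rel \<inter> AS \<times> AS)" unfolding trans_def rel_def by auto
qed auto

lemma class_eq: "x \<in> AS \<Longrightarrow> relA `` {x} = rel `` {x}"
  unfolding relA_def using rel_in by auto

lemma faces_eq: "faces n G = AS // relA"
  unfolding faces_def quotient_def using class_eq rel_def by auto

lemma finite_AS: "finite AS"
proof -
  have "AS = range RootS \<union> (\<lambda>(v, i). VS v i) ` (verts n \<times> {1..4})"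
    by (auto simp: all_slots_def)
  thus ?thesis by (simp add: ty_UNIV verts_def)
qed

lemma finite_faces: "finite (faces n G)"
  unfolding faces_eq using finite_AS by (rule finite_quotient[OF _ ]) (use equivA in \<open>auto simp: equiv_def\<close>)

lemma face_sub: "f \<in> faces n G \<Longrightarrow> f \<subseteq> AS"
proof -
  assume "f \<in> faces n G"
  hence "f \<in> AS // relA" by (simp add: faces_eq)
  thus ?thesis using Union_quotient[OF equivA] by blast
qed

lemma face_eq: "f \<in> faces n G \<Longrightarrow> s \<in> f \<Longrightarrow> f = relA `` {s}"
  unfolding faces_eq using equivA
  by (metis Image_singleton_iff equiv_class_eq quotientE)

lemma face_of: "s \<in> AS \<Longrightarrow> relA `` {s} \<in> faces n G \<and> s \<in> relA `` {s}"
  unfolding faces_eq by (auto intro: quotientI simp: relA_def rel_def)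

lemma face_unique: "f \<in> faces n G \<Longrightarrow> g \<in> faces n G \<Longrightarrow> s \<in> f \<Longrightarrow> s \<in> g \<Longrightarrow> f = g"
  using face_eq by metis

lemma gam_rel: "(x, y) \<in> gam n G \<Longrightarrow> x \<in> f \<Longrightarrow> f \<in> faces n G \<Longrightarrow> y \<in> f"
proof -
  assume a: "(x, y) \<in> gam n G" "x \<in> f" "f \<in> faces n G"
  have "(x, y) \<in> relA" using a(1) gam_in[OF a(1)] unfolding relA_def rel_def by auto
  thus ?thesis using face_eq[OF a(3) a(2)] by auto
qed

lemma gam_rel': "(x, y) \<in> gam n G \<Longrightarrow> y \<in> f \<Longrightarrow> f \<in> faces n G \<Longrightarrow> x \<in> f"
proof -
  assume a: "(x, y) \<in> gam n G" "y \<in> f" "f \<in> faces n G"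
  have "(y, x) \<in> relA" using a(1) gam_in[OF a(1)] unfolding relA_def rel_def by auto
  thus ?thesis using face_eq[OF a(3) a(2)] by auto
qed

lemma face_has_vs: "f \<in> faces n G \<Longrightarrow> \<exists>v i. v \<in> verts n \<and> i \<in> {1..4} \<and> VS v i \<in> f"
proof -
  assume f: "f \<in> faces n G"
  then obtain x where x: "x \<in> f" using face_of face_eq faces_eq
    by (metis equivA equiv_class_self quotientE)
  show ?thesis
  proof (cases x)
    case (VS v i)
    thus ?thesis using x face_sub[OF f] by (auto simp: all_slots_def)
  next
    case (RootS \<tau>)
    obtain \<tau>1 where t1: "pslot G 1 = RootS \<tau>1" using one_root by auto
    have v1: "1 \<in> verts n" using n2 by (auto simp: verts_def)
    have g1: "(VS 1 1, RootS \<tau>1) \<in> gam n G" using gam_solid[OF v1] t1 by simp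
    have groot: "(RootS TA, RootS TB) \<in> gam n G" by (rule gam_root)
    have "RootS TA \<in> f \<and> RootS TB \<in> f"
      using RootS x gam_rel[OF groot _ f] gam_rel'[OF groot _ f] by (cases \<tau>) auto
    hence "RootS \<tau>1 \<in> f" by (cases \<tau>1) auto
    hence "VS 1 1 \<in> f" using gam_rel'[OF g1 _ f] by auto
    thus ?thesis using v1 by (intro exI[of _ 1]) auto
  qed
qed

lemma face_has_wavy: "f \<in> faces n G \<Longrightarrow> \<exists>v i. v \<in> wavy n G \<and> i \<in> {1..4} \<and> VS v i \<in> f"
proof -
  assume f: "f \<in> faces n G"
  then obtain v i where vi: "v \<in> verts n" "i \<in> {1..4}" "VS v i \<in> f" using face_has_vs by blast
  show ?thesis
  proof (cases "v \<in> wavy n G")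
    case True thus ?thesis using vi by auto
  next
    case False
    let ?u = "mate G v"
    have u: "?u \<in> wavy n G" "mate G ?u = v"
      using mt[OF vi(1)] False vi(1) unfolding wavy_def by auto
    obtain i' where i': "i' \<in> {1..4}" "cp (propg G ?u) i' = i"
      using cp_surj[OF pg[OF u(1)] vi(2)] by auto
    have "(VS ?u i', VS v i) \<in> gam n G" using gam_corner[OF u(1) i'(1)] u(2) i'(2) by simp
    thus ?thesis using gam_rel'[OF _ vi(3) f] u i' by blast
  qed
qed

lemma card_wavy: "2 * card (wavy n G) = n"
proof -
  let ?W = "wavy n G"
  have Wv: "\<And>v. v \<in> ?W \<Longrightarrow> v \<in> verts n \<and> v < mate G v" by (simp add: wavy_def)
  have vs: "verts n = ?W \<union> mate G ` ?W"
  proof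
    show "verts n \<subseteq> ?W \<union> mate G ` ?W"
    proof
      fix v assume v: "v \<in> verts n"
      note m = mt[OF v]
      show "v \<in> ?W \<union> mate G ` ?W"
      proof (cases "v < mate G v")
        case True thus ?thesis using v by (simp add: wavy_def)
      next
        case False
        hence "mate G v < mate G (mate G v)" using m by linarith
        hence "mate G v \<in> ?W" using m by (simp add: wavy_def)
        hence "mate G (mate G v) \<in> mate G ` ?W" by (rule imageI)
        thus ?thesis using m by simp
      qed
    qed
    show "?W \<union> mate G ` ?W \<subseteq> verts n"
    proof
      fix x assume "x \<in> ?W \<union> mate G ` ?W"
      thus "x \<in> verts n"
      proof
        assume "x \<in> ?W" thus ?thesis using Wv by blast
      next
        assume "x \<in> mate G ` ?W"
        then obtain y where "y \<in> ?W" "x = mate G y" by blast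
        thus ?thesis using Wv[of y] mt[of y] by blast
      qed
    qed
  qed
  have disj: "?W \<inter> mate G ` ?W = {}"
  proof (rule ccontr)
    assume "?W \<inter> mate G ` ?W \<noteq> {}"
    then obtain x y where xy: "x \<in> ?W" "y \<in> ?W" "x = mate G y" by blast
    have "mate G x = y" using xy(3) mt[of y] Wv[OF xy(2)] by simp
    thus False using Wv[OF xy(1)] Wv[OF xy(2)] xy(3) by simp
  qed
  have inj: "inj_on (mate G) ?W"
  proof (rule inj_onI)
    fix x y assume "x \<in> ?W" "y \<in> ?W" "mate G x = mate G y"
    thus "x = y" using mt[of x] mt[of y] Wv by metis
  qed
  have fin: "finite ?W" using wavy_sub by (auto simp: verts_def intro: finite_subset)
  have "card (verts n) = card ?W + card (mate G ` ?W)"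
    unfolding vs by (rule card_Un_disjoint) (use fin disj in auto)
  thus ?thesis using card_image[OF inj] by (simp add: verts_def)
qed


definition fl where "fl = (SOME fl. distinct fl \<and> set fl = faces n G)"
definition rl where "rl = sorted_list_of_set (wavy n G)"
abbreviation "FF \<equiv> length fl"

lemma fl: "distinct fl" "set fl = faces n G"
proof -
  have "\<exists>fl. distinct fl \<and> set fl = faces n G" using finite_distinct_list[OF finite_faces] by metis
  hence "distinct fl \<and> set fl = faces n G" unfolding fl_def by (rule someI_ex)
  thus "distinct fl" "set fl = faces n G" by auto
qed

lemma FF_card: "FF = card (faces n G)"
  using fl distinct_card by metis

lemma fin_wavy: "finite (wavy n G)" using wavy_sub by (auto simp: verts_def intro: finite_subset)

lemma rl: "distinct rl" "set rl = wavy n G" "length rl = card (wavy n G)"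
  unfolding rl_def using fin_wavy by auto

lemma Emat_eq: "Emat n G = mat (length rl) FF (\<lambda>(a, b). Eent G (rl ! a) (fl ! b))"
  unfolding Emat_def Let_def rl_def fl_def by (rule refl)

lemma Emat_carrier: "Emat n G \<in> carrier_mat (length rl) FF"
  unfolding Emat_eq by (rule mat_carrier)

lemma Rk_eq: "Rk n G = vec_space.rank (length rl) (Emat n G)"
proof -
  have "dim_row (Emat n G) = length rl" using Emat_carrier by (rule carrier_matD(1))
  thus ?thesis unfolding Rk_def by (simp only:)
qed

lemma slot_idx: "s \<in> AS \<Longrightarrow> \<exists>!b. b < FF \<and> s \<in> fl ! b"
proof -
  assume s: "s \<in> AS"
  obtain f where f: "f \<in> faces n G" "s \<in> f" using face_of[OF s] by blast
  have "f \<in> set fl" using f(1) fl(2) by simp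
  then obtain b where b: "b < FF" "fl ! b = f" by (auto simp: in_set_conv_nth)
  show ?thesis
  proof (rule ex1I[of _ b])
    show "b < FF \<and> s \<in> fl ! b" using b f by simp
    fix b' assume b': "b' < FF \<and> s \<in> fl ! b'"
    have fb': "fl ! b' \<in> faces n G" using b' fl(2) nth_mem by blast
    have "fl ! b' = f" by (rule face_unique[OF fb' f(1)]) (use b' f in auto)
    hence "fl ! b' = fl ! b" using b by simp
    thus "b' = b" using nth_eq_iff_index_eq[OF fl(1)] b b' by blast
  qed
qed

definition bof where "bof s = (THE b. b < FF \<and> s \<in> fl ! b)"

lemma bof: "s \<in> AS \<Longrightarrow> bof s < FF \<and> s \<in> fl ! bof s"
  unfolding bof_def by (rule theI'[OF slot_idx])

lemma ex1_eq: "\<exists>!x. P x \<Longrightarrow> P a \<Longrightarrow> P b \<Longrightarrow> a = b"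
  by (metis ex1E)

lemma bof_uniq: "s \<in> AS \<Longrightarrow> b < FF \<Longrightarrow> s \<in> fl ! b \<Longrightarrow> b = bof s"
proof -
  assume a: "s \<in> AS" "b < FF" "s \<in> fl ! b"
  show ?thesis by (rule ex1_eq[OF slot_idx[OF a(1)]]) (use a bof[OF a(1)] in auto)
qed

lemma sum_slot: "s \<in> AS \<Longrightarrow> (\<Sum>b<FF. if s \<in> fl ! b then g b else 0) = g (bof s)"
proof -
  assume s: "s \<in> AS"
  have "(\<Sum>b<FF. if s \<in> fl ! b then g b else 0) = (\<Sum>b<FF. if b = bof s then g b else 0)"
  proof (rule sum.cong[OF refl])
    fix b assume "b \<in> {..<FF}"
    hence b: "b < FF" by simp
    show "(if s \<in> fl ! b then g b else 0) = (if b = bof s then g b else 0)"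
    proof (cases "s \<in> fl ! b")
      case True
      hence "b = bof s" using bof_uniq[OF s b] by simp
      thus ?thesis using True by simp
    next
      case False
      hence "b \<noteq> bof s" using bof[OF s] by metis
      thus ?thesis using False by simp
    qed
  qed
  also have "\<dots> = g (bof s)" using bof[OF s] by simp
  finally show ?thesis .
qed

definition WS where "WS = (\<lambda>(v, i). VS v i) ` (wavy n G \<times> {1..4})"
definition PF where "PF = {f \<in> faces n G. card (f \<inter> WS) = 1}"
definition WP where "WP = {v \<in> wavy n G. \<exists>f\<in>PF. \<exists>i\<in>{1..4}. VS v i \<in> f}"

lemma WS_mem: "s \<in> WS \<longleftrightarrow> (\<exists>v i. v \<in> wavy n G \<and> i \<in> {1..4} \<and> s = VS v i)"
proof
  assume "s \<in> WS" thus "\<exists>v i. v \<in> wavy n G \<and> i \<in> {1..4} \<and> s = VS v i" unfolding WS_def by auto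
next
  assume "\<exists>v i. v \<in> wavy n G \<and> i \<in> {1..4} \<and> s = VS v i"
  then obtain v i where vi: "v \<in> wavy n G" "i \<in> {1..4}" "s = VS v i" by blast
  show "s \<in> WS" unfolding WS_def by (rule image_eqI[of _ _ "(v, i)"]) (use vi in auto)
qed

lemma WS_card: "card WS = 2 * n"
proof -
  have "inj_on (\<lambda>(v, i). VS v i) (wavy n G \<times> {1..4::nat})" by (auto simp: inj_on_def)
  hence "card WS = card (wavy n G \<times> {1..4::nat})" unfolding WS_def by (rule card_image)
  also have "\<dots> = 4 * card (wavy n G)" using fin_wavy by (simp add: card_cartesian_product)
  finally show ?thesis using card_wavy by simp
qed

lemma WS_sub: "WS \<subseteq> AS" unfolding WS_def all_slots_def using wavy_sub by auto

lemma fin_WS: "finite WS" unfolding WS_def using fin_wavy by auto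

lemma face_WS_pos: "f \<in> faces n G \<Longrightarrow> 1 \<le> card (f \<inter> WS)"
proof -
  assume f: "f \<in> faces n G"
  obtain v i where "v \<in> wavy n G" "i \<in> {1..4}" "VS v i \<in> f" using face_has_wavy[OF f] by blast
  hence "VS v i \<in> f \<inter> WS" unfolding WS_def by force
  thus ?thesis using fin_WS by (metis One_nat_def Suc_leI card_gt_0_iff empty_iff finite_Int)
qed

lemma sum_WS: "(\<Sum>f\<in>faces n G. card (f \<inter> WS)) = 2 * n"
proof -
  have "card (\<Union>f\<in>faces n G. f \<inter> WS) = (\<Sum>f\<in>faces n G. card (f \<inter> WS))"
    by (rule card_UN_disjoint) (use finite_faces fin_WS face_unique in auto)
  moreover have "(\<Union>f\<in>faces n G. f \<inter> WS) = WS"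
    using WS_sub face_of by blast
  ultimately show ?thesis using WS_card by simp
qed

lemma faces_le: "card (faces n G) \<le> n + 2 * card WP"
proof -
  let ?Fa = "faces n G"
  have PFs: "PF \<subseteq> ?Fa" unfolding PF_def by auto
  have S1: "(\<Sum>f\<in>?Fa. card (f \<inter> WS)) = (\<Sum>f\<in>PF. card (f \<inter> WS)) + (\<Sum>f\<in>?Fa - PF. card (f \<inter> WS))"
    using sum.subset_diff[OF PFs finite_faces, of "\<lambda>f. card (f \<inter> WS)"] by simp
  have S2: "(\<Sum>f\<in>PF. card (f \<inter> WS)) = card PF" unfolding PF_def by simp
  have S3: "(\<Sum>f\<in>?Fa - PF. card (f \<inter> WS)) \<ge> (\<Sum>f\<in>?Fa - PF. 2)"
  proof (rule sum_mono)
    fix f assume "f \<in> ?Fa - PF"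
    thus "2 \<le> card (f \<inter> WS)" using face_WS_pos[of f] unfolding PF_def by force
  qed
  have S4: "(\<Sum>f\<in>?Fa - PF. (2::nat)) = 2 * card (?Fa - PF)" by simp
  have A: "2 * n \<ge> card PF + 2 * card (?Fa - PF)" using S1 S2 S3 S4 sum_WS by linarith
  have B: "card (?Fa - PF) = card ?Fa - card PF" using PFs finite_faces by (simp add: card_Diff_subset finite_subset)
  have C: "card PF \<le> card ?Fa" using PFs finite_faces card_mono by blast
  define g where "g f = (SOME s. s \<in> f \<inter> WS)" for f
  have g: "g f \<in> f \<inter> WS" if "f \<in> PF" for f
  proof -
    have "f \<inter> WS \<noteq> {}" using that unfolding PF_def by auto
    hence "\<exists>s. s \<in> f \<inter> WS" by blast
    thus ?thesis unfolding g_def by (rule someI_ex)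
  qed
  have inj: "inj_on g PF"
  proof (rule inj_onI)
    fix f f' assume ff: "f \<in> PF" "f' \<in> PF" "g f = g f'"
    have "g f \<in> f" "g f \<in> f'" using g[OF ff(1)] g[OF ff(2)] ff(3) by auto
    thus "f = f'" using face_unique[of f f' "g f"] ff PFs by blast
  qed
  have img: "g ` PF \<subseteq> (\<lambda>(v, i). VS v i) ` (WP \<times> {1..4})"
  proof
    fix s assume "s \<in> g ` PF"
    then obtain f where f: "f \<in> PF" "s = g f" by blast
    have "s \<in> WS" using g[OF f(1)] f(2) by blast
    hence "\<exists>v i. v \<in> wavy n G \<and> i \<in> {1..4} \<and> s = VS v i" by (simp only: WS_mem)
    then obtain v i where vi: "v \<in> wavy n G" "i \<in> {1..4}" "s = VS v i" by blast
    have "VS v i \<in> f" using g[OF f(1)] f(2) vi(3) by simp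
    hence "v \<in> WP" unfolding WP_def using vi(1,2) f(1) by blast
    thus "s \<in> (\<lambda>(v, i). VS v i) ` (WP \<times> {1..4})"
      by (intro image_eqI[of _ _ "(v, i)"]) (use vi in auto)
  qed
  have finWP: "finite WP" unfolding WP_def using fin_wavy by auto
  have "card PF = card (g ` PF)" using card_image[OF inj] by simp
  also have "\<dots> \<le> card ((\<lambda>(v, i). VS v i) ` (WP \<times> {1..4::nat}))"
    by (rule card_mono[OF _ img]) (use finWP in auto)
  also have "\<dots> \<le> card (WP \<times> {1..4::nat})" by (rule card_image_le) (use finWP in auto)
  also have "\<dots> = 4 * card WP" using finWP by (simp add: card_cartesian_product)
  finally have D: "card PF \<le> 4 * card WP" .
  show ?thesis using A B C D by linarith
qed

lemma Eent_private:
  assumes f: "f \<in> faces n G" and v: "v \<in> wavy n G" and i0: "i0 \<in> {1..4}"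
    and fw: "f \<inter> WS = {VS v i0}"
  shows "Eent G v f = (if i0 \<le> 2 then 1 else -1)" and "\<And>u. u \<in> wavy n G \<Longrightarrow> u \<noteq> v \<Longrightarrow> Eent G u f = 0"
proof -
  have mem: "VS u i \<in> f \<longleftrightarrow> u = v \<and> i = i0" if "u \<in> wavy n G" "i \<in> {1..4}" for u i
  proof -
    have "VS u i \<in> WS" using that unfolding WS_def by force
    thus ?thesis using fw by blast
  qed
  have "Eent G v f = (\<Sum>i\<in>{1..4::nat}. if i = i0 then (if i \<le> 2 then 1 else -1) else 0)"
    unfolding Eent_def using mem[OF v] by (intro sum.cong) auto
  also have "\<dots> = (if i0 \<le> 2 then 1 else -1)" using i0 by simp
  finally show "Eent G v f = (if i0 \<le> 2 then 1 else -1)" .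
  fix u assume u: "u \<in> wavy n G" "u \<noteq> v"
  show "Eent G u f = 0" unfolding Eent_def using mem[OF u(1)] u(2) by (intro sum.neutral) auto
qed

lemma rank_ge_WP: "card WP \<le> Rk n G"
proof -
  define pf where "pf v = (SOME f. f \<in> PF \<and> (\<exists>i\<in>{1..4}. VS v i \<in> f))" for v
  have pf: "pf v \<in> PF \<and> (\<exists>i\<in>{1..4}. VS v i \<in> pf v)" if "v \<in> WP" for v
    unfolding pf_def by (rule someI_ex) (use that in \<open>auto simp: WP_def\<close>)
  define c where "c v = (SOME b. b < FF \<and> fl ! b = pf v)" for v
  have c: "c v < FF \<and> fl ! c v = pf v" if "v \<in> WP" for v
  proof -
    have "pf v \<in> set fl" using pf[OF that] fl(2) unfolding PF_def by auto
    hence "\<exists>b. b < FF \<and> fl ! b = pf v" by (metis in_set_conv_nth)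
    thus ?thesis unfolding c_def by (rule someI_ex)
  qed
  define ro where "ro v = (SOME a. a < length rl \<and> rl ! a = v)" for v
  have ro: "ro v < length rl \<and> rl ! ro v = v" if "v \<in> WP" for v
  proof -
    have "v \<in> set rl" using that rl(2) unfolding WP_def by auto
    hence "\<exists>a. a < length rl \<and> rl ! a = v" by (metis in_set_conv_nth)
    thus ?thesis unfolding ro_def by (rule someI_ex)
  qed
  have priv: "\<exists>i0\<in>{1..4}. pf v \<inter> WS = {VS v i0}" if v: "v \<in> WP" for v
  proof -
    obtain i where i: "i \<in> {1..4}" "VS v i \<in> pf v" using pf[OF v] by blast
    have "VS v i \<in> WS" using i v unfolding WS_def WP_def by force
    moreover have "card (pf v \<inter> WS) = 1" using pf[OF v] unfolding PF_def by auto
    ultimately obtain x where x: "pf v \<inter> WS = {x}" using card_1_singletonE by blast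
    moreover have "VS v i \<in> pf v \<inter> WS" using i(2) \<open>VS v i \<in> WS\<close> by blast
    ultimately have "x = VS v i" by simp
    hence "pf v \<inter> WS = {VS v i}" using x by simp
    thus ?thesis using i by blast
  qed
  have WPw: "WP \<subseteq> wavy n G" unfolding WP_def by auto
  have pff: "pf v \<in> faces n G" if "v \<in> WP" for v using pf[OF that] unfolding PF_def by auto
  have "card WP \<le> vec_space.rank (length rl) (Emat n G)"
  proof (rule vec_space.rank_ge_private'[OF Emat_carrier, of WP c ro])
    show "finite WP" using fin_wavy WPw finite_subset by blast
    show "\<And>x. x \<in> WP \<Longrightarrow> c x < FF" using c by blast
    show "\<And>x. x \<in> WP \<Longrightarrow> ro x < length rl" using ro by blast
    show "\<And>x. x \<in> WP \<Longrightarrow> Emat n G $$ (ro x, c x) \<noteq> 0"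
    proof -
      fix x assume x: "x \<in> WP"
      obtain i0 where i0: "i0 \<in> {1..4}" "pf x \<inter> WS = {VS x i0}" using priv[OF x] by blast
      have "Emat n G $$ (ro x, c x) = Eent G x (pf x)" unfolding Emat_eq using ro[OF x] c[OF x] by simp
      also have "\<dots> = (if i0 \<le> 2 then 1 else -1)"
        by (rule Eent_private(1)[OF pff[OF x] _ i0]) (use x WPw in auto)
      finally show "Emat n G $$ (ro x, c x) \<noteq> 0" by simp
    qed
    show "\<And>x y. x \<in> WP \<Longrightarrow> y \<in> WP \<Longrightarrow> x \<noteq> y \<Longrightarrow> Emat n G $$ (ro x, c y) = 0"
    proof -
      fix x y assume xy: "x \<in> WP" "y \<in> WP" "x \<noteq> y"
      obtain i0 where i0: "i0 \<in> {1..4}" "pf y \<inter> WS = {VS y i0}" using priv[OF xy(2)] by blast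
      have "Emat n G $$ (ro x, c y) = Eent G x (pf y)" unfolding Emat_eq using ro[OF xy(1)] c[OF xy(2)] by simp
      also have "\<dots> = 0"
        by (rule Eent_private(2)[OF pff[OF xy(2)] _ i0]) (use xy WPw in auto)
      finally show "Emat n G $$ (ro x, c y) = 0" .
    qed
  qed
  thus ?thesis using Rk_eq by simp
qed

lemma WP_le: "2 * card WP \<le> n"
proof -
  have "card WP \<le> card (wavy n G)" unfolding WP_def using fin_wavy by (intro card_mono) auto
  thus ?thesis using card_wavy by simp
qed

lemma FR_bound: "2 * card (faces n G) \<le> 3 * n + 2 * Rk n G"
  using faces_le rank_ge_WP WP_le by linarith

lemma adm:
  assumes "admissible n r G (S, j, k)"
  shows adm_out: "\<And>v. v \<notin> verts n \<Longrightarrow> S v = 0 \<and> j v = 0 \<and> k v = 0"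
  and adm_le: "\<And>v. v \<in> verts n \<Longrightarrow> j v \<le> S v \<and> k v \<le> S v"
  and adm_sol: "\<And>v. v \<in> verts n \<Longrightarrow> j v = mom r (S, j, k) (pslot G v)"
  and adm_dsh: "\<And>s. s \<in> leaves n G \<Longrightarrow> mom r (S, j, k) (dashed G s) = mom r (S, j, k) s"
  and adm_wv: "\<And>v. v \<in> wavy n G \<Longrightarrow> S v = S (mate G v) \<and>
      propagator (propg G v) (S v) (j v) (k v) (S (mate G v)) (j (mate G v)) (k (mate G v))"
  using assms unfolding admissible_def by auto

lemma mf_le: "j \<le> S \<Longrightarrow> k \<le> S \<Longrightarrow> mf S j k i \<le> S"
  by (simp add: mf_def)

lemma gam_mom:
  assumes a: "admissible n r G (S, j, k)" and xy: "(x, y) \<in> gam n G"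
  shows "mom r (S, j, k) x = mom r (S, j, k) y"
  using xy unfolding gam_def
proof (elim UnE)
  assume "(x, y) \<in> {(VS v 1, pslot G v) |v. v \<in> verts n}"
  then obtain v where "v \<in> verts n" "x = VS v 1" "y = pslot G v" by blast
  thus ?thesis using adm_sol[OF a] by simp
next
  assume "(x, y) \<in> {(s, dashed G s) |s. s \<in> leaves n G}"
  then obtain s where "s \<in> leaves n G" "x = s" "y = dashed G s" by blast
  thus ?thesis using adm_dsh[OF a] by simp
next
  assume "(x, y) \<in> {(VS v i, VS (mate G v) (cp (propg G v) i)) |v i. v \<in> wavy n G \<and> i \<in> {1..4}}"
  then obtain v i where vi: "x = VS v i" "y = VS (mate G v) (cp (propg G v) i)" "v \<in> wavy n G" "i \<in> {1..4}"
    by blast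
  have v: "v \<in> verts n" using vi(3) wavy_sub by auto
  have w: "mate G v \<in> verts n" using mt[OF v] by simp
  have "mf (S v) (j v) (k v) i = mf (S (mate G v)) (j (mate G v)) (k (mate G v)) (cp (propg G v) i)"
    by (rule corner_mom[OF pg[OF vi(3)] vi(4)]) (use adm_wv[OF a vi(3)] adm_le[OF a v] adm_le[OF a w] in auto)
  thus ?thesis by (simp only: vi(1) vi(2) mom_VS)
next
  assume "(x, y) \<in> {(RootS TA, RootS TB)}"
  thus ?thesis by simp
qed

lemma rel_mom:
  assumes a: "admissible n r G (S, j, k)" and xy: "(x, y) \<in> rel"
  shows "mom r (S, j, k) x = mom r (S, j, k) y"
  using xy unfolding rel_def
proof (induction rule: rtrancl_induct)
  case base thus ?case by simp
next
  case (step y z)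
  have "mom r (S, j, k) y = mom r (S, j, k) z"
    using step(2) gam_mom[OF a, of y z] gam_mom[OF a, of z y] by auto
  thus ?case using step(3) by simp
qed

lemma face_mom:
  assumes a: "admissible n r G (S, j, k)" and f: "f \<in> faces n G" and s: "s \<in> f" "s' \<in> f"
  shows "mom r (S, j, k) s = mom r (S, j, k) s'"
proof -
  have "(s, s') \<in> relA" using face_eq[OF f s(1)] s(2) by auto
  thus ?thesis using rel_mom[OF a] unfolding relA_def by auto
qed

definition Wt where "Wt r a = (\<Sum>s\<in>leaves n G. mom r a s)"

lemma weight:
  assumes a: "admissible n r G (S, j, k)"
  shows "Wt r (S, j, k) = r + (\<Sum>v\<in>verts n. S v - j v)"
proof -
  let ?m = "mom r (S, j, k)"
  let ?V = "verts n"
  have finV: "finite ?V" by (simp add: verts_def)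
  have C: "child_slots n = {RootS TA, RootS TB} \<union> (\<lambda>(v, c). VS v c) ` (?V \<times> {2..4})"
    by (auto simp: child_slots_def ty_UNIV)
  have injC: "inj_on (\<lambda>(v, c). VS v c) (?V \<times> {2..4::nat})" by (auto simp: inj_on_def)
  have sumC: "sum ?m (child_slots n) = 2 * r + (\<Sum>v\<in>?V. (S v - j v) + k v + (S v - k v))"
  proof -
    have "sum ?m (child_slots n) = sum ?m {RootS TA, RootS TB} + sum ?m ((\<lambda>(v, c). VS v c) ` (?V \<times> {2..4}))"
      unfolding C by (rule sum.union_disjoint) (use finV in auto)
    also have "sum ?m ((\<lambda>(v, c). VS v c) ` (?V \<times> {2..4})) = (\<Sum>(v, c)\<in>?V \<times> {2..4}. ?m (VS v c))"
      by (subst sum.reindex[OF injC]) (simp add: case_prod_unfold)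
    also have "\<dots> = (\<Sum>v\<in>?V. \<Sum>c\<in>{2..4}. ?m (VS v c))"
      by (rule sum.cartesian_product[symmetric])
    also have "\<dots> = (\<Sum>v\<in>?V. (S v - j v) + k v + (S v - k v))"
    proof (rule sum.cong[OF refl])
      fix v
      have "{2..4::nat} = {2,3,4}" by auto
      thus "(\<Sum>c\<in>{2..4}. ?m (VS v c)) = (S v - j v) + k v + (S v - k v)" by simp
    qed
    finally show ?thesis by simp
  qed
  have Psub: "pslot G ` ?V \<subseteq> child_slots n" using pslot_child by auto
  have finC: "finite (child_slots n)" using finite_AS child_sub finite_subset by blast
  have sumP: "sum ?m (pslot G ` ?V) = (\<Sum>v\<in>?V. j v)"
    by (subst sum.reindex[OF pslot_inj]) (use adm_sol[OF a] in simp)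
  have LS: "leaf_slots n G = leaves n G \<union> antileaves n G"
    unfolding leaf_slots_def leaves_def antileaves_def using ty.exhaust by auto
  have LSd: "leaves n G \<inter> antileaves n G = {}" unfolding leaves_def antileaves_def by auto
  have finL: "finite (leaf_slots n G)" unfolding leaf_slots_def using finC by simp
  have sumL: "sum ?m (leaf_slots n G) = 2 * Wt r (S, j, k)"
  proof -
    have "sum ?m (leaf_slots n G) = sum ?m (leaves n G) + sum ?m (antileaves n G)"
      unfolding LS by (rule sum.union_disjoint) (use finL LS LSd in auto)
    also have "sum ?m (antileaves n G) = (\<Sum>s\<in>leaves n G. ?m (dashed G s))"
      by (rule sum.reindex_bij_betw[OF dbij, symmetric])
    also have "\<dots> = sum ?m (leaves n G)" using adm_dsh[OF a] by simp
    finally show ?thesis unfolding Wt_def by simp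
  qed
  have split0: "sum ?m (child_slots n) = sum ?m (child_slots n - pslot G ` ?V) + sum ?m (pslot G ` ?V)"
    by (rule sum.subset_diff[OF Psub finC])
  have split: "sum ?m (child_slots n) = sum ?m (pslot G ` ?V) + sum ?m (leaf_slots n G)"
    unfolding leaf_slots_def using split0 by linarith
  have E2: "(\<Sum>v\<in>?V. (S v - j v) + k v + (S v - k v)) = (\<Sum>v\<in>?V. S v - j v) + (\<Sum>v\<in>?V. S v - j v) + (\<Sum>v\<in>?V. j v)"
  proof -
    have "(\<Sum>v\<in>?V. (S v - j v) + k v + (S v - k v)) = (\<Sum>v\<in>?V. (S v - j v) + (S v - j v) + j v)"
    proof (rule sum.cong[OF refl])
      fix v assume "v \<in> ?V"
      hence "j v \<le> S v" "k v \<le> S v" using adm_le[OF a] by auto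
      thus "(S v - j v) + k v + (S v - k v) = (S v - j v) + (S v - j v) + j v" by arith
    qed
    thus ?thesis by (simp add: sum.distrib)
  qed
  show ?thesis using sumC sumP sumL split E2 by linarith
qed

lemma S_bound:
  assumes a: "admissible n r G (S, j, k)" and v: "v \<in> verts n"
  shows "S v \<le> r + (\<Sum>u\<in>{1..v}. S u - j u)"
  using v
proof (induction v rule: less_induct)
  case (less v)
  have jle: "j v \<le> S v" using adm_le[OF a less(2)] by simp
  have mem: "S v - j v \<le> (\<Sum>u\<in>{1..v}. S u - j u)"
    using less(2) by (intro member_le_sum) (auto simp: verts_def)
  show ?case
  proof (cases "\<exists>\<tau>. pslot G v = RootS \<tau>")
    case True
    hence "j v = r" using adm_sol[OF a less(2)] by auto
    thus ?thesis using mem jle by linarith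
  next
    case False
    then obtain u c where uc: "pslot G v = VS u c" "u \<in> verts n" "u < v" "c \<in> {2..4}"
      using pslot_cases[OF less(2)] by blast
    have "j v = mf (S u) (j u) (k u) c" using adm_sol[OF a less(2)] uc(1) by (simp only: mom_VS)
    also have "\<dots> \<le> S u" using adm_le[OF a uc(2)] by (intro mf_le) auto
    also have "\<dots> \<le> r + (\<Sum>w\<in>{1..u}. S w - j w)" by (rule less.IH[OF uc(3) uc(2)])
    finally have jv: "j v \<le> r + (\<Sum>w\<in>{1..u}. S w - j w)" .
    have "(\<Sum>w\<in>{1..u}. S w - j w) + (S v - j v) = (\<Sum>w\<in>insert v {1..u}. S w - j w)"
      using uc(3) by simp
    also have "\<dots> \<le> (\<Sum>w\<in>{1..v}. S w - j w)"
      using uc(2,3) less(2) by (intro sum_mono2) (auto simp: verts_def)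
    finally show ?thesis using jv jle by linarith
  qed
qed

lemma S_le_Wt:
  assumes a: "admissible n r G (S, j, k)" and v: "v \<in> verts n"
  shows "S v \<le> Wt r (S, j, k)"
proof -
  have "(\<Sum>u\<in>{1..v}. S u - j u) \<le> (\<Sum>u\<in>verts n. S u - j u)"
    using v by (intro sum_mono2) (auto simp: verts_def)
  thus ?thesis using S_bound[OF a v] weight[OF a] by linarith
qed

lemma slot_le_Wt:
  assumes a: "admissible n r G (S, j, k)" and s: "s \<in> AS"
  shows "mom r (S, j, k) s \<le> Wt r (S, j, k)"
proof (cases s)
  case (RootS \<tau>)
  thus ?thesis using weight[OF a] by simp
next
  case (VS v i)
  hence v: "v \<in> verts n" using s by (auto simp: all_slots_def)
  have "mom r (S, j, k) s = mf (S v) (j v) (k v) i" using VS by (simp only: mom_VS)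
  also have "\<dots> \<le> S v" using adm_le[OF a v] by (intro mf_le) auto
  finally show ?thesis using S_le_Wt[OF a v] by linarith
qed

lemma adm_inj:
  assumes a: "admissible n r G (S, j, k)" and a': "admissible n r G (S', j', k')"
    and eq: "\<And>s. s \<in> AS \<Longrightarrow> mom r (S, j, k) s = mom r (S', j', k') s"
  shows "(S, j, k) = (S', j', k')"
proof -
  have pt: "S v = S' v \<and> j v = j' v \<and> k v = k' v" for v
  proof (cases "v \<in> verts n")
    case True
    have in1: "VS v i \<in> AS" if "i \<in> {1..4}" for i using True that by (auto simp: all_slots_def)
    have e1: "j v = j' v" using eq[OF in1[of 1]] by (simp add: mom_VS mf_def)
    have e2: "S v - j v = S' v - j' v" using eq[OF in1[of 2]] by (simp add: mom_VS mf_def)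
    have e3: "k v = k' v" using eq[OF in1[of 3]] by (simp add: mom_VS mf_def)
    have "S v = S' v" using e1 e2 adm_le[OF a True] adm_le[OF a' True] by linarith
    thus ?thesis using e1 e3 by simp
  next
    case False thus ?thesis using adm_out[OF a False] adm_out[OF a' False] by simp
  qed
  thus ?thesis by auto
qed

definition rep where "rep f = (SOME s. s \<in> f)"

lemma fl_face: "b < FF \<Longrightarrow> fl ! b \<in> faces n G"
  using fl(2) nth_mem by blast

lemma rep: "f \<in> faces n G \<Longrightarrow> rep f \<in> f"
proof -
  assume f: "f \<in> faces n G"
  obtain v i where "VS v i \<in> f" using face_has_vs[OF f] by blast
  hence "\<exists>s. s \<in> f" by blast
  thus ?thesis unfolding rep_def by (rule someI_ex)
qed

lemma rep_AS: "b < FF \<Longrightarrow> rep (fl ! b) \<in> AS"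
  using rep[OF fl_face] face_sub[OF fl_face] by blast

definition xv where "xv r a = vec FF (\<lambda>b. real (mom r a (rep (fl ! b))))"

lemma xv_carrier: "xv r a \<in> carrier_vec FF" unfolding xv_def by simp

lemma xv_slot:
  assumes a: "admissible n r G (S, j, k)" and s: "s \<in> AS"
  shows "xv r (S, j, k) $ bof s = real (mom r (S, j, k) s)"
proof -
  have b: "bof s < FF" "s \<in> fl ! bof s" using bof[OF s] by auto
  have "mom r (S, j, k) (rep (fl ! bof s)) = mom r (S, j, k) s"
    by (rule face_mom[OF a fl_face[OF b(1)] rep[OF fl_face[OF b(1)]] b(2)])
  thus ?thesis unfolding xv_def using b by simp
qed

definition sg :: "nat \<Rightarrow> real" where "sg i = (if i \<le> 2 then 1 else -1)"

lemma Eent_sg: "Eent G v f = (\<Sum>i\<in>{1..4}. if VS v i \<in> f then sg i else 0)"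
  unfolding Eent_def sg_def by simp

lemma sum14: "(\<Sum>i\<in>{1..4::nat}. g i) = g 1 + g 2 + g 3 + (g 4 :: real)"
proof -
  have "{1..4::nat} = {1,2,3,4}" by auto
  thus ?thesis by simp
qed

lemma Emat_idx: "i < length rl \<Longrightarrow> b < FF \<Longrightarrow> Emat n G $$ (i, b) = Eent G (rl ! i) (fl ! b)"
  unfolding Emat_eq by simp

lemma rl_verts: "i < length rl \<Longrightarrow> rl ! i \<in> verts n"
  using rl(2) wavy_sub nth_mem by blast

lemma row_sum: "i < length rl \<Longrightarrow> (\<Sum>b<FF. Emat n G $$ (i, b)) = 0"
proof -
  assume i: "i < length rl"
  let ?v = "rl ! i"
  have vAS: "VS ?v k \<in> AS" if "k \<in> {1..4}" for k using rl_verts[OF i] that by (auto simp: all_slots_def)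
  have "(\<Sum>b<FF. Emat n G $$ (i, b)) = (\<Sum>b<FF. \<Sum>k\<in>{1..4}. if VS ?v k \<in> fl ! b then sg k else 0)"
    using i by (simp add: Emat_idx Eent_sg)
  also have "\<dots> = (\<Sum>k\<in>{1..4}. \<Sum>b<FF. if VS ?v k \<in> fl ! b then sg k else 0)"
    by (rule sum.swap)
  also have "\<dots> = (\<Sum>k\<in>{1..4::nat}. sg k)"
    using sum_slot[OF vAS, of _ "\<lambda>_. sg _"] by (intro sum.cong) auto
  also have "\<dots> = 0" by (simp only: sum14) (simp add: sg_def)
  finally show ?thesis .
qed

lemma E_xv:
  assumes a: "admissible n r G (S, j, k)"
  shows "Emat n G *\<^sub>v xv r (S, j, k) = 0\<^sub>v (length rl)"
proof (rule eq_vecI)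
  show "dim_vec (Emat n G *\<^sub>v xv r (S, j, k)) = dim_vec (0\<^sub>v (length rl) :: real vec)"
    using Emat_carrier by simp
  fix i assume "i < dim_vec (0\<^sub>v (length rl) :: real vec)"
  hence i: "i < length rl" by simp
  let ?v = "rl ! i"
  let ?x = "xv r (S, j, k)"
  have v: "?v \<in> verts n" by (rule rl_verts[OF i])
  have vAS: "VS ?v l \<in> AS" if "l \<in> {1..4}" for l using v that by (auto simp: all_slots_def)
  have "(Emat n G *\<^sub>v ?x) $ i = (\<Sum>b<FF. Emat n G $$ (i, b) * ?x $ b)"
    using Emat_carrier i xv_carrier[of r "(S, j, k)"]
    by (auto simp: scalar_prod_def atLeast0LessThan intro!: sum.cong)
  also have "\<dots> = (\<Sum>b<FF. \<Sum>l\<in>{1..4}. if VS ?v l \<in> fl ! b then sg l * ?x $ b else 0)"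
  proof (rule sum.cong[OF refl])
    fix b assume "b \<in> {..<FF}"
    hence "Emat n G $$ (i, b) = Eent G ?v (fl ! b)" using i by (simp add: Emat_idx)
    moreover have ifz: "\<And>P a x. (if P then a else 0) * (x::real) = (if P then a * x else 0)" by simp
    ultimately show "Emat n G $$ (i, b) * ?x $ b = (\<Sum>l\<in>{1..4}. if VS ?v l \<in> fl ! b then sg l * ?x $ b else 0)"
      by (simp only: Eent_sg sum_distrib_right ifz)
  qed
  also have "\<dots> = (\<Sum>l\<in>{1..4}. \<Sum>b<FF. if VS ?v l \<in> fl ! b then sg l * ?x $ b else 0)"
    by (rule sum.swap)
  also have "\<dots> = (\<Sum>l\<in>{1..4::nat}. sg l * ?x $ bof (VS ?v l))"
    using sum_slot[OF vAS, of _ "\<lambda>b. sg _ * ?x $ b"] by (intro sum.cong) auto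
  also have "\<dots> = (\<Sum>l\<in>{1..4::nat}. sg l * real (mf (S ?v) (j ?v) (k ?v) l))"
    using xv_slot[OF a vAS] by (intro sum.cong) (auto simp only: mom_VS)
  also have "\<dots> = 0"
    using adm_le[OF a v] by (simp only: sum14) (simp add: sg_def mf_def of_nat_diff)
  finally show "(Emat n G *\<^sub>v ?x) $ i = 0\<^sub>v (length rl) $ i" using i by simp
qed

lemma prodW:
  assumes p: "0 < p"
  shows "(\<Prod>s\<in>leaves n G. ennreal (p ^ mom r a s)) = ennreal (p ^ Wt r a)"
proof -
  have "(\<Prod>s\<in>leaves n G. ennreal (p ^ mom r a s)) = ennreal (\<Prod>s\<in>leaves n G. p ^ mom r a s)"
    using p by (intro prod_ennreal) simp
  also have "(\<Prod>s\<in>leaves n G. p ^ mom r a s) = p ^ Wt r a" unfolding Wt_def by (simp add: power_sum)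
  finally show ?thesis .
qed

lemma amp_bound:
  fixes p :: real
  assumes p: "0 < p" "p < 1" and ev: "even n"
  shows "amp p n r G \<le> ennreal (real (4 * n) ^ (3 * n div 2 - 1) * p powr (real r / real (4 * n))
                                  * Nc p powr (- real_of_int (deg n G)))"
proof -
  define E where "E = Emat n G"
  define b0 where "b0 = bof (RootS TA)"
  have rootAS: "RootS TA \<in> AS" by (simp add: all_slots_def)
  have b0: "b0 < FF" using bof[OF rootAS] unfolding b0_def by simp
  obtain K where K: "K \<subseteq> {..<FF} - {b0}" "card K = Rk n G"
    "\<forall>y\<in>carrier_vec FF. E *\<^sub>v y = 0\<^sub>v (length rl) \<longrightarrow> (\<forall>b<FF. b \<notin> K \<longrightarrow> y $ b = 0) \<longrightarrow> y = 0\<^sub>v FF"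
    using vec_space.kernel_basis[OF Emat_carrier b0 row_sum] Rk_eq unfolding E_def by auto
  define J where "J = {..<FF} - K - {b0}"
  define D where "D = card J"
  have finJ: "finite J" unfolding J_def by simp
  have DFF: "D + Rk n G + 1 = FF"
  proof -
    have "J = {..<FF} - (K \<union> {b0})" unfolding J_def by auto
    moreover have "K \<union> {b0} \<subseteq> {..<FF}" using K(1) b0 by auto
    moreover have "card (K \<union> {b0}) = Rk n G + 1"
    proof -
      have "b0 \<notin> K" using K(1) by auto
      moreover have "finite K" using K(1) finite_subset by blast
      ultimately show ?thesis using K(2) by simp
    qed
    moreover have "card ({..<FF} - (K \<union> {b0})) = card {..<FF} - card (K \<union> {b0})"
      by (rule card_Diff_subset) (use \<open>K \<union> {b0} \<subseteq> {..<FF}\<close> finite_subset in auto)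
    ultimately have "D = FF - (Rk n G + 1)" unfolding D_def by simp
    moreover have "Rk n G + 1 \<le> FF" using card_mono[OF _ \<open>K \<union> {b0} \<subseteq> {..<FF}\<close>] \<open>card (K \<union> {b0}) = Rk n G + 1\<close> by simp
    ultimately show ?thesis by simp
  qed
  have Dle: "2 * D + 2 \<le> 3 * n" using FR_bound FF_card DFF by linarith
  define c where "c = 4 * n"
  have c1: "1 \<le> c" and Dc: "D + 1 \<le> c" using Dle n2 unfolding c_def by linarith+
  define q where "q = p powr (1 / real c)"
  have q: "0 < q" "q < 1" "1 / (1 - q) \<le> real c / (1 - p)"
    using q_facts[OF p c1] unfolding q_def by auto
  define \<psi> where "\<psi> a = restrict (\<lambda>b. mom r a (rep (fl ! b))) J" for a
  define Adm where "Adm = {a. admissible n r G a}"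
  have JFF: "\<And>b. b \<in> J \<Longrightarrow> b < FF" unfolding J_def by auto
  have inj: "inj_on \<psi> Adm"
  proof (rule inj_onI)
    fix a a' assume aa: "a \<in> Adm" "a' \<in> Adm" "\<psi> a = \<psi> a'"
    obtain S j k where a: "a = (S, j, k)" by (cases a) auto
    obtain S' j' k' where a': "a' = (S', j', k')" by (cases a') auto
    have ad: "admissible n r G (S, j, k)" using aa(1) a unfolding Adm_def by simp
    have ad': "admissible n r G (S', j', k')" using aa(2) a' unfolding Adm_def by simp
    define y where "y = xv r a - xv r a'"
    have yc: "y \<in> carrier_vec FF" unfolding y_def using xv_carrier by auto
    have Ey: "E *\<^sub>v y = 0\<^sub>v (length rl)"
      unfolding y_def E_def
      using mult_minus_distrib_mat_vec[OF Emat_carrier xv_carrier xv_carrier] E_xv[OF ad] E_xv[OF ad'] a a'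
      by simp
    have yz: "\<forall>b<FF. b \<notin> K \<longrightarrow> y $ b = 0"
    proof (intro allI impI)
      fix b assume b: "b < FF" "b \<notin> K"
      have yb: "y $ b = xv r a $ b - xv r a' $ b" unfolding y_def
        by (rule index_minus_vec) (use b in \<open>simp add: xv_def\<close>)
      show "y $ b = 0"
      proof (cases "b = b0")
        case True
        thus ?thesis using yb xv_slot[OF ad rootAS] xv_slot[OF ad' rootAS] a a' unfolding b0_def by simp
      next
        case False
        hence bJ: "b \<in> J" using b unfolding J_def by auto
        have "xv r a $ b = real (\<psi> a b)" unfolding xv_def \<psi>_def using b bJ by simp
        moreover have "xv r a' $ b = real (\<psi> a' b)" unfolding xv_def \<psi>_def using b bJ by simp
        ultimately show ?thesis using yb aa(3) by simp
      qed
    qed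
    have y0: "y = 0\<^sub>v FF" using K(3) yc Ey yz by blast
    have "mom r (S, j, k) s = mom r (S', j', k') s" if s: "s \<in> AS" for s
    proof -
      have "y $ bof s = 0" using y0 bof[OF s] by simp
      moreover have "y $ bof s = xv r a $ bof s - xv r a' $ bof s" unfolding y_def
        by (rule index_minus_vec) (use bof[OF s] in \<open>simp add: xv_def\<close>)
      ultimately have "xv r a $ bof s = xv r a' $ bof s" by simp
      thus ?thesis using xv_slot[OF ad s] xv_slot[OF ad' s] a a' by simp
    qed
    thus "a = a'" using adm_inj[OF ad ad'] a a' by simp
  qed
  have psiW: "\<psi> a b \<le> Wt r a" if "a \<in> Adm" "b \<in> J" for a b
  proof -
    obtain S j k where a: "a = (S, j, k)" by (cases a) auto
    have ad: "admissible n r G (S, j, k)" using that(1) a unfolding Adm_def by simp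
    have "\<psi> a b = mom r (S, j, k) (rep (fl ! b))" unfolding \<psi>_def using that(2) a by simp
    also have "\<dots> \<le> Wt r (S, j, k)" by (rule slot_le_Wt[OF ad rep_AS[OF JFF[OF that(2)]]])
    finally show ?thesis using a by simp
  qed
  have rW: "r \<le> Wt r a" if "a \<in> Adm" for a
  proof -
    obtain S j k where a: "a = (S, j, k)" by (cases a) auto
    have ad: "admissible n r G (S, j, k)" using that a unfolding Adm_def by simp
    show ?thesis using weight[OF ad] a by simp
  qed
  define GG where "GG y = (\<Prod>b\<in>J. q ^ y b)" for y :: "nat \<Rightarrow> nat"
  have GG0: "0 \<le> GG y" for y unfolding GG_def using q by (simp add: prod_nonneg)
  have ptw: "p ^ Wt r a \<le> p powr (real r / real c) * GG (\<psi> a)" if aA: "a \<in> Adm" for a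
  proof -
    define T where "T = (\<Sum>b\<in>J. \<psi> a b)"
    have "T \<le> (\<Sum>b\<in>J. Wt r a)" unfolding T_def using psiW[OF aA] by (intro sum_mono) auto
    hence TD: "T \<le> D * Wt r a" unfolding D_def by simp
    have "r + T \<le> (D + 1) * Wt r a" using TD rW[OF aA] by simp
    also have "\<dots> \<le> c * Wt r a" using Dc by (intro mult_right_mono) auto
    finally have rT: "real (r + T) \<le> real c * real (Wt r a)" by (simp only: of_nat_mult[symmetric] of_nat_le_iff)
    have cpos: "0 < real c" using c1 by simp
    have le: "real (r + T) / real c \<le> real (Wt r a)" using rT cpos by (simp add: divide_simps mult.commute)
    have "p ^ Wt r a = p powr real (Wt r a)" using p by (simp add: powr_realpow)
    also have "\<dots> \<le> p powr (real (r + T) / real c)" by (rule powr_mono'[OF le]) (use p in auto)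
    also have "real (r + T) / real c = real r / real c + (\<Sum>b\<in>J. real (\<psi> a b) / real c)"
      unfolding T_def by (simp add: add_divide_distrib sum_divide_distrib)
    also have "p powr (real r / real c + (\<Sum>b\<in>J. real (\<psi> a b) / real c))
        = p powr (real r / real c) * (\<Prod>b\<in>J. p powr (real (\<psi> a b) / real c))"
      using p by (simp add: powr_add powr_sum)
    also have "(\<Prod>b\<in>J. p powr (real (\<psi> a b) / real c)) = GG (\<psi> a)"
      unfolding GG_def
    proof (rule prod.cong[OF refl])
      fix b
      have "p powr (real (\<psi> a b) / real c) = (p powr (1 / real c)) powr real (\<psi> a b)"
        by (simp add: powr_powr)
      also have "\<dots> = q ^ \<psi> a b" unfolding q_def[symmetric] using q by (simp add: powr_realpow)
      finally show "p powr (real (\<psi> a b) / real c) = q ^ \<psi> a b" .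
    qed
    finally show ?thesis .
  qed
  define B where "B = p powr (real r / real c) * (1 / (1 - q)) ^ D"
  have fin_sums: "(\<Sum>a\<in>A0. \<Prod>s\<in>leaves n G. ennreal (p ^ mom r a s)) \<le> ennreal B"
    if A0: "finite A0" "A0 \<subseteq> Adm" for A0
  proof -
    have "(\<Sum>a\<in>A0. \<Prod>s\<in>leaves n G. ennreal (p ^ mom r a s)) = (\<Sum>a\<in>A0. ennreal (p ^ Wt r a))"
      using prodW[OF p(1)] by simp
    also have "\<dots> = ennreal (\<Sum>a\<in>A0. p ^ Wt r a)" using p by (intro sum_ennreal) simp
    also have "\<dots> \<le> ennreal B"
    proof (rule ennreal_leI)
      define Tm where "Tm = (\<Sum>a\<in>A0. Wt r a)"
      have "(\<Sum>a\<in>A0. p ^ Wt r a) \<le> (\<Sum>a\<in>A0. p powr (real r / real c) * GG (\<psi> a))"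
        using ptw A0(2) by (intro sum_mono) auto
      also have "\<dots> = p powr (real r / real c) * (\<Sum>a\<in>A0. GG (\<psi> a))" by (simp add: sum_distrib_left)
      also have "(\<Sum>a\<in>A0. GG (\<psi> a)) = (\<Sum>y\<in>\<psi> ` A0. GG y)"
        using sum.reindex[OF inj_on_subset[OF inj A0(2)], of GG] by simp
      also have "\<dots> \<le> (\<Sum>y\<in>PiE J (\<lambda>_. {..Tm}). GG y)"
      proof (rule sum_mono2)
        show "finite (PiE J (\<lambda>_. {..Tm}))" using finJ by (simp add: finite_PiE)
        show "\<psi> ` A0 \<subseteq> PiE J (\<lambda>_. {..Tm})"
        proof
          fix y assume "y \<in> \<psi> ` A0"
          then obtain a where a: "a \<in> A0" "y = \<psi> a" by blast
          have "Wt r a \<le> Tm" unfolding Tm_def using a(1) A0(1) by (intro member_le_sum) auto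
          hence "\<forall>b\<in>J. \<psi> a b \<in> {..Tm}" using psiW a A0(2) by (meson atMost_iff le_trans subsetD)
          thus "y \<in> PiE J (\<lambda>_. {..Tm})" unfolding a(2) \<psi>_def by (auto simp: PiE_iff)
        qed
        show "\<And>y. y \<in> PiE J (\<lambda>_. {..Tm}) - \<psi> ` A0 \<Longrightarrow> 0 \<le> GG y" using GG0 by simp
      qed
      also have "(\<Sum>y\<in>PiE J (\<lambda>_. {..Tm}). GG y) = (\<Prod>b\<in>J. \<Sum>t\<in>{..Tm}. q ^ t)"
        unfolding GG_def by (rule prod_sum_PiE[symmetric]) (use finJ in auto)
      also have "\<dots> \<le> (\<Prod>b\<in>J. 1 / (1 - q))"
        by (rule prod_mono) (use q in \<open>auto intro: geo_le sum_nonneg\<close>)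
      also have "\<dots> = (1 / (1 - q)) ^ D" unfolding D_def by simp
      finally show "(\<Sum>a\<in>A0. p ^ Wt r a) \<le> B"
        unfolding B_def using p by (simp add: mult_left_mono)
    qed
    finally show ?thesis .
  qed
  have inf: "(\<Sum>\<^sub>\<infinity>a\<in>Adm. \<Prod>s\<in>leaves n G. ennreal (p ^ mom r a s)) \<le> ennreal B"
    by (rule infsum_le_finite_sums) (auto intro: nonneg_summable_on_complete fin_sums)
  define NN where "NN = Nc p"
  have NN: "NN = 1 / (1 - p)" "0 < NN" "1 \<le> NN" unfolding NN_def Nc_def using p by auto
  have Bpos: "0 \<le> B" unfolding B_def using q by simp
  have "amp p n r G \<le> ennreal (inverse (NN ^ n)) * ennreal B"
    unfolding amp_def NN_def[symmetric] Adm_def[symmetric] by (rule mult_left_mono[OF inf]) simp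
  also have "\<dots> = ennreal (inverse (NN ^ n) * B)" using NN Bpos by (simp add: ennreal_mult)
  also have "\<dots> \<le> ennreal (real (4 * n) ^ (3 * n div 2 - 1) * p powr (real r / real (4 * n))
                                  * Nc p powr (- real_of_int (deg n G)))"
  proof (rule ennreal_leI)
    have degD: "- real_of_int (deg n G) = real D - real n"
      unfolding deg_def using DFF FF_card by simp
    have Npow: "NN powr (real D - real n) = NN ^ D / NN ^ n"
      using NN by (simp add: powr_diff powr_realpow)
    have base: "1 / (1 - q) \<le> real c * NN" using q(3) unfolding NN(1) by simp
    have cN: "(1 / (1 - q)) ^ D \<le> (real c * NN) ^ D"
      by (rule power_mono[OF base]) (use q in simp)
    have cD: "real c ^ D \<le> real c ^ (3 * n div 2 - 1)"
      using c1 Dle by (intro power_increasing) auto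
    have "inverse (NN ^ n) * B = p powr (real r / real c) * (1 / (1 - q)) ^ D / NN ^ n"
      unfolding B_def by (simp add: field_simps)
    also have "\<dots> \<le> p powr (real r / real c) * (real c * NN) ^ D / NN ^ n"
      using cN NN by (intro divide_right_mono mult_left_mono) auto
    also have "\<dots> = p powr (real r / real c) * real c ^ D * (NN ^ D / NN ^ n)"
      by (simp add: power_mult_distrib)
    also have "\<dots> \<le> p powr (real r / real c) * real c ^ (3 * n div 2 - 1) * (NN ^ D / NN ^ n)"
      using cD NN by (intro mult_right_mono mult_left_mono) auto
    also have "\<dots> = real (4 * n) ^ (3 * n div 2 - 1) * p powr (real r / real (4 * n))
                                  * Nc p powr (- real_of_int (deg n G))"
      unfolding degD NN_def[symmetric] Npow c_def by simp
    finally show "inverse (NN ^ n) * B \<le> real (4 * n) ^ (3 * n div 2 - 1) * p powr (real r / real (4 * n))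
                                  * Nc p powr (- real_of_int (deg n G))" .
  qed
  finally show ?thesis .
qed

end

theorem proposition2:
  fixes n r :: nat and p :: real and G :: graph
  assumes "even n" and "n \<ge> 2" and "0 < p" and "p < 1" and "is_graph n G"
  shows "amp p n r G \<le> ennreal (real (4 * n) ^ (3 * n div 2 - 1) * p powr (real r / real (4 * n))
                                  * Nc p powr (- real_of_int (deg n G)))"
proof -
  interpret GG n G using assms(5) assms(2) by unfold_locales
  show ?thesis by (rule amp_bound[OF assms(3) assms(4) assms(1)])
qed

end
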